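(* Let $(X,d)$ be a compact metric space, $k\geq1$, $T:\mathbb{Z}^k\times X\to X$ a continuous action, and $c>0$ such that any two distinct $x,y\in X$ satisfy $\sup_{u\in\mathbb{Z}^k}d(T^ux,T^uy)>2c$. Then \[\limsup_{N\to\infty}\frac{\mathrm{widim}_{2c}\left(X,d^T_{[-N,N]^k}\right)}{N^{k-1}}<\infty.\]
   Context: For $\Omega\subset\mathbb{R}^k$, $d^T_\Omega(x,y)=\sup_{u\in\Omega\cap\mathbb{Z}^k}d(T^ux,T^uy)$. The order of an open cover is the largest $n\geq0$ such that some $n+1$ distinct members have nonempty intersection; $\mathrm{widim}_\varepsilon(X,\rho)$ is the minimum order of an open cover of $X$ all of whose members have $\rho$-diameter $\leq\varepsilon$. *)

theory Defs
  imports "HOL-Analysis.Analysis" "HOL-Library.Extended_Real"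
begin

text \<open>Elements of Z^k are encoded as functions nat => int vanishing outside {..<k}.\<close>
definition Zk :: "nat \<Rightarrow> (nat \<Rightarrow> int) set" where
  "Zk k = {u. \<forall>i\<ge>k. u i = 0}"

definition cube :: "nat \<Rightarrow> nat \<Rightarrow> (nat \<Rightarrow> int) set" where
  "cube k N = {u \<in> Zk k. \<forall>i<k. \<bar>u i\<bar> \<le> int N}"

definition continuous_Zk_action ::
  "nat \<Rightarrow> 'a::metric_space set \<Rightarrow> ((nat \<Rightarrow> int) \<Rightarrow> 'a \<Rightarrow> 'a) \<Rightarrow> bool" where
  "continuous_Zk_action k X T \<longleftrightarrow>
     (\<forall>u\<in>Zk k. T u ` X \<subseteq> X \<and> continuous_on X (T u)) \<and>
     (\<forall>x\<in>X. T (\<lambda>_. 0) x = x) \<and>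
     (\<forall>u\<in>Zk k. \<forall>v\<in>Zk k. \<forall>x\<in>X. T (\<lambda>i. u i + v i) x = T u (T v x))"

definition dT :: "((nat \<Rightarrow> int) \<Rightarrow> 'a \<Rightarrow> 'a::metric_space) \<Rightarrow> (nat \<Rightarrow> int) set \<Rightarrow> 'a \<Rightarrow> 'a \<Rightarrow> real" where
  "dT T \<Omega> x y = (SUP u\<in>\<Omega>. dist (T u x) (T u y))"

definition cover_order :: "'a set set \<Rightarrow> enat" where
  "cover_order \<U> = Sup {enat n | n. \<exists>F\<subseteq>\<U>. finite F \<and> card F = n + 1 \<and> \<Inter>F \<noteq> {}}"

definition widim :: "real \<Rightarrow> 'a::topological_space set \<Rightarrow> ('a \<Rightarrow> 'a \<Rightarrow> real) \<Rightarrow> enat" where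
  "widim \<epsilon> X \<rho> = Inf {cover_order \<U> | \<U>.
      (\<forall>U\<in>\<U>. openin (top_of_set X) U) \<and> \<Union>\<U> = X \<and>
      (\<forall>U\<in>\<U>. \<forall>x\<in>U. \<forall>y\<in>U. \<rho> x y \<le> \<epsilon>)}"

end

theory Submission
  imports Defs
begin

lemma openin_imp_gt:
  fixes g :: "'x::topological_space \<Rightarrow> real"
  assumes "continuous_on X g"
  shows "openin (top_of_set X) {y\<in>X. Q \<longrightarrow> g y > t}"
proof (cases Q)
  case True
  have "openin (top_of_set X) (X \<inter> g -` {t<..})"
    by (rule continuous_openin_preimage[OF assms, of UNIV]) (auto simp: open_greaterThan open_lessThan)
  moreover have "X \<inter> g -` {t<..} = {y\<in>X. Q \<longrightarrow> g y > t}" using True by auto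
  ultimately show ?thesis by simp
next
  case False then show ?thesis by (simp add: openin_subtopology_self)
qed

lemma openin_imp_lt:
  fixes g :: "'x::topological_space \<Rightarrow> real"
  assumes "continuous_on X g"
  shows "openin (top_of_set X) {y\<in>X. Q \<longrightarrow> g y < t}"
proof (cases Q)
  case True
  have "openin (top_of_set X) (X \<inter> g -` {..<t})"
    by (rule continuous_openin_preimage[OF assms, of UNIV]) (auto simp: open_greaterThan open_lessThan)
  moreover have "X \<inter> g -` {..<t} = {y\<in>X. Q \<longrightarrow> g y < t}" using True by auto
  ultimately show ?thesis by simp
next
  case False then show ?thesis by (simp add: openin_subtopology_self)
qed

lemma comb_lemma:
  fixes X :: "'a::metric_space set" and J :: "'j set" and \<U> :: "'j \<Rightarrow> 'a set set"
  assumes X: "compact X" and J: "finite J"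
    and fin: "\<And>j. j \<in> J \<Longrightarrow> finite (\<U> j)"
    and op: "\<And>j U. j \<in> J \<Longrightarrow> U \<in> \<U> j \<Longrightarrow> openin (top_of_set X) U"
    and cov: "\<And>j. j \<in> J \<Longrightarrow> \<Union>(\<U> j) = X"
    and mult: "\<And>j y. j \<in> J \<Longrightarrow> y \<in> X \<Longrightarrow> card {U\<in>\<U> j. y \<in> U} \<le> m"
  shows "\<exists>\<V>. (\<forall>V\<in>\<V>. openin (top_of_set X) V) \<and> \<Union>\<V> = X \<and>
            (\<forall>V\<in>\<V>. \<forall>j\<in>J. \<exists>U\<in>\<U> j. V \<subseteq> U) \<and>
            (\<forall>y\<in>X. finite {V\<in>\<V>. y \<in> V} \<and> card {V\<in>\<V>. y \<in> V} \<le> card J * m + 1)"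
proof (cases "X = {}")
  case True
  then show ?thesis by (intro exI[of _ "{}"]) auto
next
  case Xne: False
  define \<psi> :: "'a set \<Rightarrow> 'a \<Rightarrow> real" where
    "\<psi> U x = (if U = X then 1 else infdist x (X - U))" for U x
  have psi_cont: "continuous_on X (\<psi> U)" for U
    by (cases "U = X") (auto simp: \<psi>_def intro!: continuous_intros)
  have psi_nonneg: "\<psi> U x \<ge> 0" for U x by (simp add: \<psi>_def infdist_nonneg)
  have psi_pos: "\<psi> U x > 0 \<longleftrightarrow> x \<in> U" if "openin (top_of_set X) U" "x \<in> X" for U x
  proof (cases "U = X")
    case True then show ?thesis using that by (simp add: \<psi>_def)
  next
    case False
    have sub: "U \<subseteq> X" using that openin_imp_subset by fastforce
    have "closedin (top_of_set X) (X - U)" using that(1) openin_closedin_eq by fastforce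
    then have cl: "closed (X - U)"
      using X closedin_closed_trans compact_imp_closed by blast
    have ne: "X - U \<noteq> {}" using sub False by auto
    show ?thesis
    proof
      assume "\<psi> U x > 0"
      then show "x \<in> U" using False that(2) by (auto simp: \<psi>_def)
    next
      assume "x \<in> U"
      then show "\<psi> U x > 0" using False infdist_pos_not_in_closed[OF cl ne] by (simp add: \<psi>_def)
    qed
  qed
  have "\<forall>j\<in>J. \<exists>d>0. \<forall>x\<in>X. \<exists>U\<in>\<U> j. \<psi> U x \<ge> d"
  proof
    fix j assume j: "j \<in> J"
    define f where "f x = (\<Sum>U\<in>\<U> j. \<psi> U x)" for x
    have "continuous_on X f" unfolding f_def by (intro continuous_on_sum psi_cont)
    then obtain x0 where x0: "x0 \<in> X" "\<And>y. y \<in> X \<Longrightarrow> f x0 \<le> f y"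
      using continuous_attains_inf[OF X Xne] by blast
    obtain U0 where U0: "U0 \<in> \<U> j" "x0 \<in> U0" using cov[OF j] x0(1) by blast
    have "f x0 > 0" unfolding f_def
      by (rule sum_pos2[OF fin[OF j] U0(1)]) (use psi_pos[OF op[OF j U0(1)] x0(1)] U0 psi_nonneg in auto)
    have cpos: "card (\<U> j) > 0" using fin[OF j] U0(1) card_gt_0_iff by blast
    show "\<exists>d>0. \<forall>x\<in>X. \<exists>U\<in>\<U> j. \<psi> U x \<ge> d"
    proof (intro exI[of _ "f x0 / card (\<U> j)"] conjI ballI)
      show "f x0 / card (\<U> j) > 0" using \<open>f x0 > 0\<close> cpos by simp
    next
      fix x assume x: "x \<in> X"
      show "\<exists>U\<in>\<U> j. \<psi> U x \<ge> f x0 / card (\<U> j)"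
      proof (rule ccontr)
        assume "\<not> ?thesis"
        then have "\<And>U. U \<in> \<U> j \<Longrightarrow> \<psi> U x < f x0 / card (\<U> j)" by force
        then have "f x < of_nat (card (\<U> j)) * (f x0 / card (\<U> j))"
          unfolding f_def by (rule sum_bounded_above_strict) (use cpos in auto)
        also have "\<dots> = f x0" using cpos by simp
        finally show False using x0(2)[OF x] by simp
      qed
    qed
  qed
  then obtain dd where dd: "\<And>j. j \<in> J \<Longrightarrow> dd j > 0"
     "\<And>j x. j \<in> J \<Longrightarrow> x \<in> X \<Longrightarrow> \<exists>U\<in>\<U> j. \<psi> U x \<ge> dd j"
    by metis
  define \<delta> where "\<delta> = Min (insert 1 (dd ` J))"
  have dpos: "\<delta> > 0" unfolding \<delta>_def using J dd(1) by (subst Min_gr_iff) auto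
  have dle: "\<delta> \<le> dd j" if "j \<in> J" for j unfolding \<delta>_def using J that by (intro Min_le) auto
  have dprop: "\<exists>U\<in>\<U> j. \<psi> U x \<ge> \<delta>" if "j \<in> J" "x \<in> X" for j x
    using dd(2)[OF that] dle[OF that(1)] by force
  define p where "p = card J * m + 1"
  define a where "a i = \<delta> * (2 * real i + 1) / (2 * real p + 2)" for i :: nat
  define b where "b i = \<delta> * (2 * real i + 2) / (2 * real p + 2)" for i :: nat
  have apos: "a i > 0" for i unfolding a_def using dpos
    by (intro divide_pos_pos mult_pos_pos) auto
  have ab: "a i < b i" for i
  proof -
    have "\<delta> * (2 * real i + 1) < \<delta> * (2 * real i + 2)" using dpos by simp
    then show ?thesis unfolding a_def b_def by (simp add: divide_strict_right_mono)
  qed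
  have bd: "b i < \<delta>" if "i < p" for i
  proof -
    have "2 * real i + 2 < 2 * real p + 2" using that by simp
    then have "\<delta> * (2 * real i + 2) < \<delta> * (2 * real p + 2)" using dpos by simp
    then show ?thesis unfolding b_def using dpos by (simp add: field_simps)
  qed
  have ba: "b i < a i'" if "i < i'" for i i'
  proof -
    have "2 * real i + 2 < 2 * real i' + 1" using that by simp
    then have "\<delta> * (2 * real i + 2) < \<delta> * (2 * real i' + 1)" using dpos by simp
    then show ?thesis unfolding a_def b_def by (simp add: divide_strict_right_mono)
  qed
  define P where "P = Sigma J \<U>"
  have finP: "finite P" unfolding P_def using J fin by auto
  define good where "good i x \<longleftrightarrow> (\<forall>q\<in>P. \<psi> (snd q) x < a i \<or> \<psi> (snd q) x > b i)" for i x
  define Vs where "Vs i x = {y\<in>X. \<forall>q\<in>P. (\<psi> (snd q) x > b i \<longrightarrow> \<psi> (snd q) y > b i)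
       \<and> (\<psi> (snd q) x < a i \<longrightarrow> \<psi> (snd q) y < a i)}" for i x
  define \<V> where "\<V> = {Vs i x | i x. i < p \<and> x \<in> X \<and> good i x}"
  have Vs_open: "openin (top_of_set X) (Vs i x)" for i x
  proof -
    define W where "W q = {y\<in>X. \<psi> (snd q) x > b i \<longrightarrow> \<psi> (snd q) y > b i} \<inter>
        {y\<in>X. \<psi> (snd q) x < a i \<longrightarrow> \<psi> (snd q) y < a i}" for q :: "'j \<times> 'a set" 
    have "openin (top_of_set X) ((\<Inter>q\<in>P. W q) \<inter> topspace (top_of_set X))"
      using finP unfolding W_def
      by (intro openin_INT openin_Int openin_imp_gt openin_imp_lt psi_cont)
    moreover have "(\<Inter>q\<in>P. W q) \<inter> topspace (top_of_set X) = Vs i x"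
      unfolding W_def Vs_def by auto
    ultimately show ?thesis by simp
  qed
  have self: "x \<in> Vs i x" if "x \<in> X" for i x using that unfolding Vs_def by auto
  have same: "Vs i y = Vs i x" if "good i x" "y \<in> Vs i x" for i x y
  proof -
    have eq: "(\<psi> (snd q) x > b i \<longleftrightarrow> \<psi> (snd q) y > b i) \<and> (\<psi> (snd q) x < a i \<longleftrightarrow> \<psi> (snd q) y < a i)"
      if "q \<in> P" for q
    proof -
      have g1: "\<psi> (snd q) x < a i \<or> \<psi> (snd q) x > b i" using \<open>good i x\<close> that unfolding good_def by blast
      have g2: "(\<psi> (snd q) x > b i \<longrightarrow> \<psi> (snd q) y > b i) \<and> (\<psi> (snd q) x < a i \<longrightarrow> \<psi> (snd q) y < a i)"
        using \<open>y \<in> Vs i x\<close> that unfolding Vs_def by blast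
      show ?thesis using g1 g2 ab[of i] by (smt (verit))
    qed
    show ?thesis unfolding Vs_def using eq by auto
  qed
  have exgood: "\<exists>i<p. good i y" if y: "y \<in> X" for y
  proof (rule ccontr)
    assume "\<not> ?thesis"
    then have bad: "\<forall>i\<in>{..<p}. \<exists>q\<in>P. a i \<le> \<psi> (snd q) y \<and> \<psi> (snd q) y \<le> b i"
      unfolding good_def by (auto simp: not_less) (meson not_le)
    then obtain g where g: "\<And>i. i \<in> {..<p} \<Longrightarrow> g i \<in> P \<and> a i \<le> \<psi> (snd (g i)) y \<and> \<psi> (snd (g i)) y \<le> b i"
      by metis
    have inj: "inj_on g {..<p}"
    proof (rule inj_onI)
      fix i i' assume i: "i \<in> {..<p}" and i': "i' \<in> {..<p}" and e: "g i = g i'"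
      show "i = i'"
      proof (rule ccontr)
        assume "i \<noteq> i'"
        then have "i < i' \<or> i' < i" by arith
        then show False
        proof
          assume "i < i'"
          then show False using g[OF i] g[OF i'] e ba[of i i'] by (smt (verit))
        next
          assume "i' < i"
          then show False using g[OF i] g[OF i'] e ba[of i' i] by (smt (verit))
        qed
      qed
    qed
    define Q where "Q = Sigma J (\<lambda>j. {U\<in>\<U> j. y \<in> U})"
    have sub: "g ` {..<p} \<subseteq> Q"
    proof
      fix q assume "q \<in> g ` {..<p}"
      then obtain i where i: "i < p" "q = g i" by auto
      have qP: "q \<in> P" using g i by auto
      then have "fst q \<in> J" "snd q \<in> \<U> (fst q)" unfolding P_def by auto
      moreover have "\<psi> (snd q) y > 0" using g[of i] i apos[of i] by force
      ultimately have "y \<in> snd q" using psi_pos[OF op y] by blast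
      then show "q \<in> Q" unfolding Q_def using \<open>fst q \<in> J\<close> \<open>snd q \<in> \<U> (fst q)\<close>
        by (cases q) auto
    qed
    have finQ: "finite Q" unfolding Q_def using J fin by auto
    have "card Q = (\<Sum>j\<in>J. card {U\<in>\<U> j. y \<in> U})"
      unfolding Q_def using J fin by (subst card_SigmaI) auto
    also have "\<dots> \<le> card J * m" using sum_bounded_above[of J "\<lambda>j. card {U\<in>\<U> j. y \<in> U}" m] mult y
      by auto
    finally have "card Q \<le> card J * m" .
    moreover have "p \<le> card Q" using card_inj_on_le[OF inj sub finQ] by simp
    ultimately show False unfolding p_def by simp
  qed
  show ?thesis
  proof (intro exI[of _ \<V>] conjI ballI)
    fix V assume "V \<in> \<V>" then show "openin (top_of_set X) V" unfolding \<V>_def using Vs_open by auto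
  next
    show "\<Union>\<V> = X"
    proof
      show "\<Union>\<V> \<subseteq> X" unfolding \<V>_def Vs_def by auto
    next
      show "X \<subseteq> \<Union>\<V>"
      proof
        fix y assume y: "y \<in> X"
        obtain i where "i < p" "good i y" using exgood[OF y] by blast
        then show "y \<in> \<Union>\<V>" unfolding \<V>_def using self[OF y] y by blast
      qed
    qed
  next
    fix V j assume V: "V \<in> \<V>" and j: "j \<in> J"
    then obtain i x where ix: "V = Vs i x" "i < p" "x \<in> X" "good i x" unfolding \<V>_def by auto
    obtain U where U: "U \<in> \<U> j" "\<psi> U x \<ge> \<delta>" using dprop[OF j ix(3)] by blast
    have "(j, U) \<in> P" unfolding P_def using j U by auto
    have "V \<subseteq> U"
    proof
      fix z assume z: "z \<in> V"
      have "\<psi> U x > b i" using U bd[OF ix(2)] by simp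
      then have "\<psi> U z > b i" using z \<open>(j, U) \<in> P\<close> unfolding ix(1) Vs_def by fastforce
      moreover have "z \<in> X" using z unfolding ix(1) Vs_def by auto
      ultimately show "z \<in> U" using psi_pos[OF op[OF j U(1)]] apos[of i] ab[of i] by force
    qed
    then show "\<exists>U\<in>\<U> j. V \<subseteq> U" using U by blast
  next
    fix y assume y: "y \<in> X"
    have sub: "{V\<in>\<V>. y \<in> V} \<subseteq> (\<lambda>i. Vs i y) ` {..<p}"
    proof
      fix V assume "V \<in> {V\<in>\<V>. y \<in> V}"
      then obtain i x where "V = Vs i x" "i < p" "good i x" "y \<in> V" unfolding \<V>_def by auto
      then show "V \<in> (\<lambda>i. Vs i y) ` {..<p}" using same[of i x y] by auto
    qed
    show "finite {V\<in>\<V>. y \<in> V}" using finite_subset[OF sub] by auto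
    have "card {V\<in>\<V>. y \<in> V} \<le> card ((\<lambda>i. Vs i y) ` {..<p})" using card_mono[OF _ sub] by auto
    also have "\<dots> \<le> p" using card_image_le[of "{..<p}"] by auto
    finally show "card {V\<in>\<V>. y \<in> V} \<le> card J * m + 1" unfolding p_def .
  qed
qed

lemma cube_mono: "N \<le> M \<Longrightarrow> cube k N \<subseteq> cube k M"
  unfolding cube_def by force

lemma zero_in_cube: "(\<lambda>_. 0) \<in> cube k N"
  unfolding cube_def Zk_def by auto

lemma cube_sub_Zk: "cube k N \<subseteq> Zk k"
  unfolding cube_def by auto

lemma Zk_in_cube: assumes "u \<in> Zk k" shows "\<exists>M. u \<in> cube k M"
proof -
  define M where "M = (\<Sum>i<k. nat \<bar>u i\<bar>)"
  have "\<bar>u i\<bar> \<le> int M" if "i < k" for i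
  proof -
    have "nat \<bar>u i\<bar> \<le> M" unfolding M_def using that
      by (intro member_le_sum) auto
    then show ?thesis by linarith
  qed
  then show ?thesis using assms unfolding cube_def by auto
qed

definition zbox :: "nat \<Rightarrow> (nat \<Rightarrow> int set) \<Rightarrow> (nat \<Rightarrow> int) set" where
  "zbox k f = {u\<in>Zk k. \<forall>i<k. u i \<in> f i}"

lemma zbox_card: "(\<forall>i<k. finite (f i)) \<Longrightarrow> finite (zbox k f) \<and> card (zbox k f) \<le> (\<Prod>i<k. card (f i))"
proof (induction k)
  case 0
  have "zbox 0 f = {\<lambda>_. 0}" unfolding zbox_def Zk_def by auto
  then show ?case by simp
next
  case (Suc k)
  have IH: "finite (zbox k f)" "card (zbox k f) \<le> (\<Prod>i<k. card (f i))" using Suc by auto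
  have fk: "finite (f k)" using Suc.prems by auto
  have sub: "zbox (Suc k) f \<subseteq> (\<lambda>(u,t). u(k:=t)) ` (zbox k f \<times> f k)"
  proof
    fix w assume w: "w \<in> zbox (Suc k) f"
    have "w(k:=0) \<in> zbox k f" using w unfolding zbox_def Zk_def by auto
    moreover have "w k \<in> f k" using w unfolding zbox_def by auto
    moreover have "w = (w(k:=0))(k := w k)" by simp
    ultimately show "w \<in> (\<lambda>(u,t). u(k:=t)) ` (zbox k f \<times> f k)"
      by (intro image_eqI[where x="(w(k:=0), w k)"]) auto
  qed
  have fin: "finite ((\<lambda>(u,t). u(k:=t)) ` (zbox k f \<times> f k))" using IH(1) fk by auto
  have "card (zbox (Suc k) f) \<le> card ((\<lambda>(u,t). u(k:=t)) ` (zbox k f \<times> f k))"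
    by (rule card_mono[OF fin sub])
  also have "\<dots> \<le> card (zbox k f \<times> f k)" by (rule card_image_le) (use IH(1) fk in auto)
  also have "\<dots> = card (zbox k f) * card (f k)" by (simp add: card_cartesian_product)
  also have "\<dots> \<le> (\<Prod>i<k. card (f i)) * card (f k)" using IH(2) by simp
  also have "\<dots> = (\<Prod>i<Suc k. card (f i))" by simp
  finally show ?case using finite_subset[OF sub fin] by simp
qed

lemma cube_zbox: "cube k N = zbox k (\<lambda>_. {-int N..int N})"
  unfolding cube_def zbox_def by auto

lemma finite_cube: "finite (cube k N)"
  using zbox_card[of k "\<lambda>_. {-int N..int N}"] cube_zbox by simp

lemma band_card:
  assumes "L \<le> N"
  shows "card (cube k N - cube k (N - L)) \<le> k * (2 * L * (2 * N + 1) ^ (k - 1))"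
proof -
  define S where "S = {t::int. int N - int L < \<bar>t\<bar> \<and> \<bar>t\<bar> \<le> int N}"
  have S_sub: "S \<subseteq> {-int N..-(int N - int L) - 1} \<union> {int N - int L + 1..int N}"
    unfolding S_def by auto
  have finS: "finite S" using finite_subset[OF S_sub] by auto
  have "card S \<le> card ({-int N..-(int N - int L) - 1} \<union> {int N - int L + 1..int N})"
    by (rule card_mono[OF _ S_sub]) auto
  also have "\<dots> \<le> card {-int N..-(int N - int L) - 1} + card {int N - int L + 1..int N}"
    by (rule card_Un_le)
  also have "\<dots> = 2 * L" using assms by simp
  finally have cS: "card S \<le> 2 * L" .
  define g where "g i = (\<lambda>j. if j = i then S else {-int N..int N})" for i :: nat
  have sub: "cube k N - cube k (N - L) \<subseteq> (\<Union>i<k. zbox k (g i))"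
  proof
    fix u assume u: "u \<in> cube k N - cube k (N - L)"
    then obtain i where i: "i < k" "\<not> \<bar>u i\<bar> \<le> int (N - L)" unfolding cube_def by auto
    have "int (N - L) = int N - int L" using assms by simp
    then have "u i \<in> S" using i u unfolding S_def cube_def by auto
    then have "u \<in> zbox k (g i)" using u unfolding zbox_def g_def cube_def by auto
    then show "u \<in> (\<Union>i<k. zbox k (g i))" using i by blast
  qed
  have bc: "finite (zbox k (g i)) \<and> card (zbox k (g i)) \<le> 2 * L * (2 * N + 1) ^ (k - 1)" if "i < k" for i
  proof -
    have h: "finite (zbox k (g i)) \<and> card (zbox k (g i)) \<le> (\<Prod>j<k. card (g i j))"
      by (rule zbox_card) (auto simp: g_def finS)
    have "(\<Prod>j<k. card (g i j)) = card (g i i) * (\<Prod>j\<in>{..<k} - {i}. card (g i j))"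
      using that by (subst prod.remove[of _ i]) auto
    also have "(\<Prod>j\<in>{..<k} - {i}. card (g i j)) = (\<Prod>j\<in>{..<k} - {i}. 2 * N + 1)"
      by (rule prod.cong) (auto simp: g_def)
    also have "\<dots> = (2 * N + 1) ^ (k - 1)" using that by simp
    finally have "(\<Prod>j<k. card (g i j)) = card S * (2 * N + 1) ^ (k - 1)" by (simp add: g_def)
    also have "\<dots> \<le> 2 * L * (2 * N + 1) ^ (k - 1)" using cS by simp
    finally show ?thesis using h by simp
  qed
  have "card (cube k N - cube k (N - L)) \<le> card (\<Union>i<k. zbox k (g i))"
    by (rule card_mono[OF _ sub]) (use bc in auto)
  also have "\<dots> \<le> (\<Sum>i<k. card (zbox k (g i)))" by (rule card_UN_le) simp
  also have "\<dots> \<le> (\<Sum>i<k. 2 * L * (2 * N + 1) ^ (k - 1))" by (rule sum_mono) (use bc in auto)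
  also have "\<dots> = k * (2 * L * (2 * N + 1) ^ (k - 1))" by simp
  finally show ?thesis .
qed

lemma expansive_L:
  fixes X :: "'a::metric_space set"
  assumes X: "compact X" and act: "continuous_Zk_action k X T" and c: "c > 0"
   and exp: "\<forall>x\<in>X. \<forall>y\<in>X. x \<noteq> y \<longrightarrow> (SUP u\<in>Zk k. dist (T u x) (T u y)) > 2 * c"
  shows "\<exists>L. \<forall>x\<in>X. \<forall>y\<in>X. (\<forall>v\<in>cube k L. dist (T v x) (T v y) \<le> 2*c) \<longrightarrow> dist x y \<le> c/2"
proof (rule ccontr)
  define Q where "Q L p \<longleftrightarrow> fst p \<in> X \<and> snd p \<in> X \<and> (\<forall>v\<in>cube k L. dist (T v (fst p)) (T v (snd p)) \<le> 2*c) \<and> dist (fst p) (snd p) > c/2" for L p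
  assume na: "\<not> ?thesis"
  have "\<exists>p. Q L p" for L
  proof -
    obtain x y where "x \<in> X" "y \<in> X" "\<forall>v\<in>cube k L. dist (T v x) (T v y) \<le> 2*c" "\<not> dist x y \<le> c/2"
      using na by blast
    then have "Q L (x, y)" unfolding Q_def by simp
    then show ?thesis by blast
  qed
  then have "\<forall>L. \<exists>p. Q L p" by blast
  from choice[OF this] obtain f where f: "\<And>L. Q L (f L)" by blast
  define xs where "xs L = fst (f L)" for L
  define ys where "ys L = snd (f L)" for L
  have H: "\<And>L. xs L \<in> X \<and> ys L \<in> X \<and> (\<forall>v\<in>cube k L. dist (T v (xs L)) (T v (ys L)) \<le> 2*c) \<and> dist (xs L) (ys L) > c/2"
    using f unfolding xs_def ys_def Q_def by blast
  have sc: "seq_compact (X \<times> X)" using compact_Times[OF X X] compact_imp_seq_compact by blast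
  have inX: "\<forall>n. (\<lambda>n. (xs n, ys n)) n \<in> X \<times> X" using H by auto
  obtain l r where l: "l \<in> X \<times> X" "strict_mono r" "((\<lambda>n. (xs n, ys n)) \<circ> r) \<longlonglongrightarrow> l"
    using seq_compactE[OF sc inX] by blast
  obtain x y where lxy: "l = (x, y)" by (cases l)
  have xX: "x \<in> X" and yX: "y \<in> X" using l(1) lxy by auto
  have tx: "(\<lambda>n. xs (r n)) \<longlonglongrightarrow> x" using tendsto_fst[OF l(3)] lxy by (simp add: o_def)
  have ty: "(\<lambda>n. ys (r n)) \<longlonglongrightarrow> y" using tendsto_snd[OF l(3)] lxy by (simp add: o_def)
  have "dist x y \<ge> c/2"
  proof (rule tendsto_lowerbound[OF tendsto_dist[OF tx ty]])
    have "\<And>n. c / 2 \<le> dist (xs (r n)) (ys (r n))" using H less_imp_le by blast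
    then show "\<forall>\<^sub>F n in sequentially. c / 2 \<le> dist (xs (r n)) (ys (r n))"
      by (rule always_eventually[OF allI])
  qed simp
  then have "x \<noteq> y" using c by auto
  then have gt: "(SUP u\<in>Zk k. dist (T u x) (T u y)) > 2 * c" using exp xX yX by blast
  have "(SUP u\<in>Zk k. dist (T u x) (T u y)) \<le> 2 * c"
  proof (rule cSUP_least)
    show "Zk k \<noteq> {}" using zero_in_cube cube_sub_Zk by blast
  next
    fix u assume u: "u \<in> Zk k"
    obtain M where M: "u \<in> cube k M" using Zk_in_cube[OF u] by blast
    have cont: "continuous_on X (T u)" and map: "T u ` X \<subseteq> X"
      using act u unfolding continuous_Zk_action_def by auto
    have ev1: "\<forall>\<^sub>F n in sequentially. xs (r n) \<in> X" using H by simp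
    have ev2: "\<forall>\<^sub>F n in sequentially. ys (r n) \<in> X" using H by simp
    have t1: "(\<lambda>n. T u (xs (r n))) \<longlonglongrightarrow> T u x"
      by (rule continuous_on_tendsto_compose[OF cont tx xX ev1])
    have t2: "(\<lambda>n. T u (ys (r n))) \<longlonglongrightarrow> T u y"
      by (rule continuous_on_tendsto_compose[OF cont ty yX ev2])
    show "dist (T u x) (T u y) \<le> 2 * c"
    proof (rule tendsto_upperbound[OF tendsto_dist[OF t1 t2]])
      show "\<forall>\<^sub>F n in sequentially. dist (T u (xs (r n))) (T u (ys (r n))) \<le> 2 * c"
      proof (rule eventually_sequentiallyI[of M])
        fix n assume "M \<le> n"
        then have "M \<le> r n" using seq_suble[OF l(2), of n] by simp
        then have "u \<in> cube k (r n)" using M cube_mono by blast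
        then show "dist (T u (xs (r n))) (T u (ys (r n))) \<le> 2 * c" using H by blast
      qed
    qed simp
  qed
  then show False using gt by simp
qed

lemma gap_refine:
  fixes X :: "'a::metric_space set"
  assumes act: "continuous_Zk_action k X T" and c: "c > 0" and LN: "L \<le> N"
    and Lp: "\<forall>x\<in>X. \<forall>y\<in>X. (\<forall>v\<in>cube k L. dist (T v x) (T v y) \<le> 2*c) \<longrightarrow> dist x y \<le> c/2"
    and op: "\<forall>V\<in>\<V>. openin (top_of_set X) V" and cov: "\<Union>\<V> = X"
    and mult: "\<forall>y\<in>X. finite {V\<in>\<V>. y \<in> V} \<and> card {V\<in>\<V>. y \<in> V} \<le> K + 1"
    and small: "\<forall>V\<in>\<V>. \<forall>x\<in>V. \<forall>y\<in>V. \<forall>u\<in>cube k N - cube k (N - L). dist (T u x) (T u y) \<le> c/2"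
  shows "widim (2*c) X (dT T (cube k N)) \<le> enat K"
proof -
  define A where "A = cube k N"
  have VX: "V \<subseteq> X" if "V \<in> \<V>" for V using op that openin_imp_subset by blast
  have gap: "\<forall>u\<in>A. dist (T u x) (T u y) \<le> c/2"
    if V: "V \<in> \<V>" "x \<in> V" "y \<in> V" and le: "\<forall>u\<in>A. dist (T u x) (T u y) \<le> 2*c" for V x y
  proof
    fix u assume u: "u \<in> A"
    show "dist (T u x) (T u y) \<le> c/2"
    proof (cases "u \<in> cube k (N - L)")
      case False then show ?thesis using small V u A_def by blast
    next
      case True
      have uZ: "u \<in> Zk k" using u A_def cube_sub_Zk by blast
      have xX: "x \<in> X" "y \<in> X" using VX V by auto
      have TuX: "T u x \<in> X" "T u y \<in> X" using act uZ xX unfolding continuous_Zk_action_def by auto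
      have "\<forall>v\<in>cube k L. dist (T v (T u x)) (T v (T u y)) \<le> 2*c"
      proof
        fix v assume v: "v \<in> cube k L"
        have vZ: "v \<in> Zk k" using v cube_sub_Zk by blast
        have w: "(\<lambda>i. v i + u i) \<in> A"
        proof -
          have "\<bar>v i + u i\<bar> \<le> int N" if "i < k" for i
          proof -
            have "\<bar>v i\<bar> \<le> int L" "\<bar>u i\<bar> \<le> int (N - L)" using v True that unfolding cube_def by auto
            moreover have "int (N - L) = int N - int L" using LN by simp
            ultimately show ?thesis by linarith
          qed
          moreover have "(\<lambda>i. v i + u i) \<in> Zk k" using vZ uZ unfolding Zk_def by auto
          ultimately show ?thesis unfolding A_def cube_def by auto
        qed
        have "T (\<lambda>i. v i + u i) x = T v (T u x)" "T (\<lambda>i. v i + u i) y = T v (T u y)"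
          using act vZ uZ xX unfolding continuous_Zk_action_def by auto
        then show "dist (T v (T u x)) (T v (T u y)) \<le> 2*c" using le w by metis
      qed
      then show ?thesis using Lp TuX by blast
    qed
  qed
  define R where "R x y \<longleftrightarrow> (\<forall>u\<in>A. dist (T u x) (T u y) < c)" for x y
  define C where "C V x = {y\<in>V. R x y}" for V x
  define \<W> where "\<W> = {C V x | V x. V \<in> \<V> \<and> x \<in> V}"
  have finA: "finite A" "A \<noteq> {}" using finite_cube zero_in_cube unfolding A_def by (auto, blast)
  have C_open: "openin (top_of_set X) (C V x)" if "V \<in> \<V>" for V x
  proof -
    have "openin (top_of_set X) ((\<Inter>u\<in>A. {y\<in>X. True \<longrightarrow> dist (T u x) (T u y) < c}) \<inter> topspace (top_of_set X))"
    proof (rule openin_INT[OF finA(1)])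
      fix u assume u: "u \<in> A"
      then have "continuous_on X (T u)" using act cube_sub_Zk A_def unfolding continuous_Zk_action_def by blast
      then have "continuous_on X (\<lambda>y. dist (T u x) (T u y))" by (intro continuous_on_dist continuous_on_const)
      then show "openin (top_of_set X) {y\<in>X. True \<longrightarrow> dist (T u x) (T u y) < c}" by (rule openin_imp_lt)
    qed
    then have "openin (top_of_set X) (V \<inter> ((\<Inter>u\<in>A. {y\<in>X. True \<longrightarrow> dist (T u x) (T u y) < c}) \<inter> topspace (top_of_set X)))"
      using op that openin_Int by blast
    moreover have "V \<inter> ((\<Inter>u\<in>A. {y\<in>X. True \<longrightarrow> dist (T u x) (T u y) < c}) \<inter> topspace (top_of_set X)) = C V x"
      unfolding C_def R_def using VX[OF that] finA(2) by auto
    ultimately show ?thesis by simp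
  qed
  have Rlt: "\<forall>u\<in>A. dist (T u y) (T u z) \<le> c/2" if "V \<in> \<V>" "x \<in> V" "y \<in> C V x" "z \<in> C V x" for V x y z
  proof -
    have "\<forall>u\<in>A. dist (T u y) (T u z) \<le> 2 * c"
    proof
      fix u assume "u \<in> A"
      then have "dist (T u x) (T u y) < c" "dist (T u x) (T u z) < c" using that unfolding C_def R_def by auto
      moreover have "dist (T u y) (T u z) \<le> dist (T u x) (T u y) + dist (T u x) (T u z)"
        by (rule dist_triangle3)
      ultimately show "dist (T u y) (T u z) \<le> 2 * c" by linarith
    qed
    moreover have "y \<in> V" "z \<in> V" using that unfolding C_def by auto
    ultimately show ?thesis using gap[OF that(1)] by blast
  qed
  have same: "C V y = C V x" if "V \<in> \<V>" "x \<in> V" "y \<in> C V x" for V x y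
  proof
    show "C V x \<subseteq> C V y"
    proof
      fix z assume z: "z \<in> C V x"
      have "\<forall>u\<in>A. dist (T u y) (T u z) \<le> c/2" using Rlt[OF that z] .
      then have "R y z" unfolding R_def using c by fastforce
      then show "z \<in> C V y" using z unfolding C_def by auto
    qed
  next
    show "C V y \<subseteq> C V x"
    proof
      fix z assume z: "z \<in> C V y"
      have yV: "y \<in> V" using that unfolding C_def by auto
      have xC: "x \<in> C V y"
      proof -
        have "x \<in> C V x" using that c unfolding C_def R_def by auto
        then have "\<forall>u\<in>A. dist (T u y) (T u x) \<le> c/2" using Rlt[OF that(1,2) that(3)] by blast
        then have "R y x" unfolding R_def using c by fastforce
        then show ?thesis using that(2) unfolding C_def by auto
      qed
      have "\<forall>u\<in>A. dist (T u x) (T u z) \<le> c/2" using Rlt[OF that(1) yV xC z] .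
      then have "R x z" unfolding R_def using c by fastforce
      then show "z \<in> C V x" using z unfolding C_def by auto
    qed
  qed
  have Wsub: "W \<subseteq> X" if "W \<in> \<W>" for W using that VX unfolding \<W>_def C_def by blast
  have multW: "finite {W\<in>\<W>. y \<in> W} \<and> card {W\<in>\<W>. y \<in> W} \<le> K + 1" if y: "y \<in> X" for y
  proof -
    have sub: "{W\<in>\<W>. y \<in> W} \<subseteq> (\<lambda>V. C V y) ` {V\<in>\<V>. y \<in> V}"
    proof
      fix W assume "W \<in> {W\<in>\<W>. y \<in> W}"
      then obtain V x where Vx: "W = C V x" "V \<in> \<V>" "x \<in> V" "y \<in> W" unfolding \<W>_def by auto
      then have "C V y = C V x" using same by blast
      moreover have "y \<in> V" using Vx unfolding C_def by auto
      ultimately show "W \<in> (\<lambda>V. C V y) ` {V\<in>\<V>. y \<in> V}" using Vx by auto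
    qed
    have fin: "finite {V\<in>\<V>. y \<in> V}" using mult y by blast
    have "card {W\<in>\<W>. y \<in> W} \<le> card ((\<lambda>V. C V y) ` {V\<in>\<V>. y \<in> V})"
      by (rule card_mono[OF _ sub]) (use fin in auto)
    also have "\<dots> \<le> card {V\<in>\<V>. y \<in> V}" by (rule card_image_le[OF fin])
    also have "\<dots> \<le> K + 1" using mult y by blast
    finally show ?thesis using finite_subset[OF sub] fin by auto
  qed
  have ord: "cover_order \<W> \<le> enat K"
    unfolding cover_order_def
  proof (rule Sup_least)
    fix e assume "e \<in> {enat n |n. \<exists>F\<subseteq>\<W>. finite F \<and> card F = n + 1 \<and> \<Inter> F \<noteq> {}}"
    then obtain n F where nF: "e = enat n" "F \<subseteq> \<W>" "finite F" "card F = n + 1" "\<Inter> F \<noteq> {}" by blast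
    obtain z where z: "z \<in> \<Inter> F" using nF(5) by blast
    have "F \<noteq> {}" using nF(4) by auto
    then obtain W0 where "W0 \<in> F" by blast
    then have zX: "z \<in> X" using z nF(2) Wsub by blast
    have "F \<subseteq> {W\<in>\<W>. z \<in> W}" using z nF(2) by blast
    then have "card F \<le> card {W\<in>\<W>. z \<in> W}" using multW[OF zX] by (intro card_mono) auto
    then have "n + 1 \<le> K + 1" using multW[OF zX] nF(4) by linarith
    then show "e \<le> enat K" using nF(1) by simp
  qed
  have adm: "(\<forall>U\<in>\<W>. openin (top_of_set X) U) \<and> \<Union>\<W> = X \<and>
      (\<forall>U\<in>\<W>. \<forall>x\<in>U. \<forall>y\<in>U. dT T (cube k N) x y \<le> 2 * c)"
  proof (intro conjI ballI)
    fix U assume "U \<in> \<W>" then show "openin (top_of_set X) U" unfolding \<W>_def using C_open by auto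
  next
    show "\<Union>\<W> = X"
    proof
      show "\<Union>\<W> \<subseteq> X" using Wsub by blast
    next
      show "X \<subseteq> \<Union>\<W>"
      proof
        fix y assume "y \<in> X"
        then obtain V where V: "V \<in> \<V>" "y \<in> V" using cov by blast
        have "y \<in> C V y" using V c unfolding C_def R_def by auto
        then show "y \<in> \<Union>\<W>" using V unfolding \<W>_def by blast
      qed
    qed
  next
    fix U y z assume U: "U \<in> \<W>" and y: "y \<in> U" and z: "z \<in> U"
    obtain V x where Vx: "U = C V x" "V \<in> \<V>" "x \<in> V" using U unfolding \<W>_def by auto
    have "\<forall>u\<in>A. dist (T u y) (T u z) \<le> c/2" using Rlt[OF Vx(2,3)] y z Vx(1) by blast
    then have "dT T A y z \<le> c/2" unfolding dT_def by (intro cSUP_least finA(2)) auto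
    then show "dT T (cube k N) y z \<le> 2 * c" using c A_def by simp
  qed
  have "widim (2*c) X (dT T (cube k N)) \<le> cover_order \<W>"
    unfolding widim_def by (rule Inf_lower) (use adm in blast)
  then show ?thesis using ord by simp
qed

theorem proposition3p3:
  fixes X :: "'a::metric_space set" and k :: nat
    and T :: "(nat \<Rightarrow> int) \<Rightarrow> 'a \<Rightarrow> 'a" and c :: real
  assumes "compact X"
    and "k \<ge> 1"
    and "continuous_Zk_action k X T"
    and "c > 0"
    and "\<forall>x\<in>X. \<forall>y\<in>X. x \<noteq> y \<longrightarrow> (SUP u\<in>Zk k. dist (T u x) (T u y)) > 2 * c"
  shows "limsup (\<lambda>N::nat. ereal_of_enat (widim (2 * c) X (dT T (cube k N)))
                    / ereal (real N ^ (k - 1))) < \<infinity>"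
proof -
  note X = assms(1) and act = assms(3) and c = assms(4)
  obtain L where Lp: "\<forall>x\<in>X. \<forall>y\<in>X. (\<forall>v\<in>cube k L. dist (T v x) (T v y) \<le> 2*c) \<longrightarrow> dist x y \<le> c/2"
    using expansive_L[OF assms(1) assms(3) assms(4) assms(5)] by blast
  have cb: "X \<subseteq> \<Union> ((\<lambda>x. ball x (c/4)) ` X)" using c by auto
  obtain D where D: "D \<subseteq> X" "finite D" "X \<subseteq> \<Union> ((\<lambda>x. ball x (c/4)) ` D)"
  proof (rule compactE_image[OF X _ cb])
    fix x show "open (ball x (c/4))" by simp
  qed
  define \<alpha> where "\<alpha> = (\<lambda>x. X \<inter> ball x (c/4)) ` D"
  have fin\<alpha>: "finite \<alpha>" unfolding \<alpha>_def using D by simp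
  have op\<alpha>: "openin (top_of_set X) U" if "U \<in> \<alpha>" for U
    using that unfolding \<alpha>_def by (auto intro: openin_open_Int)
  have cov\<alpha>: "\<Union>\<alpha> = X" unfolding \<alpha>_def using D by auto
  have sm\<alpha>: "dist x y \<le> c/2" if H: "U \<in> \<alpha>" "x \<in> U" "y \<in> U" for U x y
  proof -
    obtain z where "U = X \<inter> ball z (c/4)" using H(1) unfolding \<alpha>_def by blast
    then have "dist z x < c/4" "dist z y < c/4" using H by auto
    moreover have "dist x y \<le> dist z x + dist z y" by (rule dist_triangle3)
    ultimately show ?thesis by linarith
  qed
  define m where "m = card \<alpha>"
  have wb: "widim (2*c) X (dT T (cube k N)) \<le> enat (card (cube k N - cube k (N - L)) * m)"
    if LN: "L \<le> N" for N
  proof -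
    define B where "B = cube k N - cube k (N - L)"
    define \<U> where "\<U> u = (\<lambda>U. X \<inter> T u -` U) ` \<alpha>" for u
    have Bsub: "B \<subseteq> Zk k" unfolding B_def using cube_sub_Zk[of k N] by auto
    have finB: "finite B" unfolding B_def using finite_cube[of k N] by simp
    have act_u: "continuous_on X (T u) \<and> T u ` X \<subseteq> X" if "u \<in> B" for u
    proof -
      have "u \<in> Zk k" using Bsub that by blast
      then show ?thesis using act unfolding continuous_Zk_action_def by simp
    qed
    have "\<exists>\<V>. (\<forall>V\<in>\<V>. openin (top_of_set X) V) \<and> \<Union>\<V> = X \<and>
            (\<forall>V\<in>\<V>. \<forall>j\<in>B. \<exists>U\<in>\<U> j. V \<subseteq> U) \<and>
            (\<forall>y\<in>X. finite {V\<in>\<V>. y \<in> V} \<and> card {V\<in>\<V>. y \<in> V} \<le> card B * m + 1)"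
    proof (rule comb_lemma[OF X finB])
      fix j assume "j \<in> B" then show "finite (\<U> j)" unfolding \<U>_def using fin\<alpha> by simp
    next
      fix j U assume j: "j \<in> B" and U: "U \<in> \<U> j"
      then obtain U0 where U0: "U0 \<in> \<alpha>" "U = X \<inter> T j -` U0" unfolding \<U>_def by auto
      have "T j \<in> X \<rightarrow> X" using act_u[OF j] by auto
      then show "openin (top_of_set X) U"
        using continuous_openin_preimage[of X "T j" X U0] act_u[OF j] op\<alpha>[OF U0(1)] U0(2) by blast
    next
      fix j assume j: "j \<in> B"
      show "\<Union>(\<U> j) = X"
      proof
        show "\<Union>(\<U> j) \<subseteq> X" unfolding \<U>_def by auto
      next
        show "X \<subseteq> \<Union>(\<U> j)"
        proof
          fix y assume y: "y \<in> X"
          then have "T j y \<in> X" using act_u[OF j] by auto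
          then obtain U0 where "U0 \<in> \<alpha>" "T j y \<in> U0" using cov\<alpha> by blast
          then show "y \<in> \<Union>(\<U> j)" using y unfolding \<U>_def by auto
        qed
      qed
    next
      fix j y assume j: "j \<in> B" and y: "y \<in> X"
      have "card {U\<in>\<U> j. y \<in> U} \<le> card (\<U> j)"
        by (rule card_mono) (simp_all add: \<U>_def fin\<alpha>)
      also have "\<dots> \<le> m" unfolding \<U>_def m_def by (rule card_image_le[OF fin\<alpha>])
      finally show "card {U\<in>\<U> j. y \<in> U} \<le> m" .
    qed
    then obtain \<V> where V0: "(\<forall>V\<in>\<V>. openin (top_of_set X) V) \<and> \<Union>\<V> = X \<and>
            (\<forall>V\<in>\<V>. \<forall>j\<in>B. \<exists>U\<in>\<U> j. V \<subseteq> U) \<and>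
            (\<forall>y\<in>X. finite {V\<in>\<V>. y \<in> V} \<and> card {V\<in>\<V>. y \<in> V} \<le> card B * m + 1)"
      by (rule exE)
    note V = conjunct1[OF V0] conjunct1[OF conjunct2[OF V0]]
      conjunct1[OF conjunct2[OF conjunct2[OF V0]]] conjunct2[OF conjunct2[OF conjunct2[OF V0]]]
    have small: "\<forall>V\<in>\<V>. \<forall>x\<in>V. \<forall>y\<in>V. \<forall>u\<in>cube k N - cube k (N - L). dist (T u x) (T u y) \<le> c/2"
    proof (intro ballI)
      fix V x y u assume Vv: "V \<in> \<V>" and x: "x \<in> V" and y: "y \<in> V" and u: "u \<in> cube k N - cube k (N - L)"
      then have uB: "u \<in> B" unfolding B_def by simp
      obtain U where U: "U \<in> \<U> u" "V \<subseteq> U" using V(3) Vv uB by blast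
      then obtain U0 where U0: "U0 \<in> \<alpha>" "U = X \<inter> T u -` U0" unfolding \<U>_def by auto
      have "T u x \<in> U0" "T u y \<in> U0" using U U0 x y by auto
      then show "dist (T u x) (T u y) \<le> c/2" using sm\<alpha>[OF U0(1)] by blast
    qed
    have "widim (2*c) X (dT T (cube k N)) \<le> enat (card B * m)"
      by (rule gap_refine[OF act c LN Lp V(1) V(2) V(4) small])
    then show ?thesis unfolding B_def .
  qed
  define C :: real where "C = real (k * (2 * L * 3 ^ (k - 1)) * m)"
  have ev: "ereal_of_enat (widim (2 * c) X (dT T (cube k N))) / ereal (real N ^ (k - 1)) \<le> ereal C"
    if N: "max L 1 \<le> N" for N
  proof -
    have LN: "L \<le> N" and N1: "1 \<le> N" using N by auto
    define K where "K = card (cube k N - cube k (N - L)) * m"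
    have w: "widim (2*c) X (dT T (cube k N)) \<le> enat K" using wb[OF LN] unfolding K_def .
    then obtain w where w1: "widim (2*c) X (dT T (cube k N)) = enat w" using enat_ile by blast
    have wK: "w \<le> K" using w w1 by simp
    have "K \<le> k * (2 * L * (2 * N + 1) ^ (k - 1)) * m"
      unfolding K_def using band_card[OF LN] by (intro mult_right_mono) auto
    also have "\<dots> \<le> k * (2 * L * (3 * N) ^ (k - 1)) * m"
    proof -
      have "(2 * N + 1) ^ (k - 1) \<le> (3 * N) ^ (k - 1)" using N1 by (intro power_mono) auto
      then show ?thesis by (intro mult_right_mono mult_left_mono) auto
    qed
    also have "\<dots> = k * (2 * L * 3 ^ (k - 1)) * m * N ^ (k - 1)"
      by (simp add: power_mult_distrib)
    finally have "w \<le> k * (2 * L * 3 ^ (k - 1)) * m * N ^ (k - 1)" using wK by linarith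
    then have "real w \<le> real (k * (2 * L * 3 ^ (k - 1)) * m * N ^ (k - 1))"
      by (simp only: of_nat_le_iff)
    then have wr: "real w \<le> C * real N ^ (k - 1)" unfolding C_def by simp
    have pos: "real N ^ (k - 1) > 0" using N1 by simp
    have "ereal_of_enat (widim (2 * c) X (dT T (cube k N))) / ereal (real N ^ (k - 1))
        = ereal (real w / real N ^ (k - 1))" using w1 pos N1 by (simp add: ereal_divide)
    also have "\<dots> \<le> ereal C" using wr pos by (simp add: divide_le_eq)
    finally show ?thesis .
  qed
  have "limsup (\<lambda>N::nat. ereal_of_enat (widim (2 * c) X (dT T (cube k N)))
                    / ereal (real N ^ (k - 1))) \<le> ereal C"
    by (rule Limsup_bounded) (rule eventually_sequentiallyI[of "max L 1"], rule ev)
  also have "\<dots> < \<infinity>" by simp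
  finally show ?thesis .
qed

end
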